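(* Let $n\ge 2$ be an integer and $0\le n_1\le n$. For $p\in(0.5,1]$, $q=1-p$ and $\rho\in[-1,1]$ define $$h(p,\rho)=\frac{pq}{(p-q)^2}\left(n+\frac{\rho\left((2n_1-n)^2-n\right)}{n-1}\right).$$ Then (i) $h(p,\rho)$ is monotonically increasing with respect to $\rho$ if $n_1/n\le \frac12-\frac{1}{2\sqrt n}$ or $n_1/n\ge \frac12+\frac{1}{2\sqrt n}$, and monotonically decreasing with respect to $\rho$ if $\frac12-\frac{1}{2\sqrt n}<n_1/n<\frac12+\frac{1}{2\sqrt n}$; (ii) $h(p,\rho)$ is monotonically decreasing with respect to $p\in(0.5,1]$.
   Context: $h(p,\rho)$ is the variance of the JRR frequency estimator; monotonicity in $\rho$ is for fixed $p$ and in $p$ for fixed $\rho$ (monotone in the non-strict sense where the coefficient of $\rho$ vanishes). *)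

theory Defs
  imports Complex_Main
begin

definition jrr_h :: "nat \<Rightarrow> nat \<Rightarrow> real \<Rightarrow> real \<Rightarrow> real" where
  "jrr_h n n1 p \<rho> =
     (let q = 1 - p in
      (p * q / (p - q)^2) *
        (real n + \<rho> * ((2 * real n1 - real n)^2 - real n) / (real n - 1)))"

end

theory Submission
  imports Defs
begin

lemma h_lin: "jrr_h n n1 p \<rho> = p*(1-p)/(2*p-1)^2 * real n
   + \<rho> * (p*(1-p)/(2*p-1)^2 * (((2 * real n1 - real n)^2 - real n) / (real n - 1)))"
proof -
  have e: "p - (1 - p) = 2*p - 1" by simp
  show ?thesis unfolding jrr_h_def Let_def e by (simp add: distrib_left)
qed

lemma g_nonneg: "(p::real) \<in> {1/2<..1} \<Longrightarrow> 0 \<le> p*(1-p)/(2*p-1)^2"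
  by (auto intro!: divide_nonneg_nonneg mult_nonneg_nonneg)

lemma g_eq: "(p::real) > 1/2 \<Longrightarrow> p*(1-p)/(2*p-1)^2 = (1/(2*p-1)^2 - 1)/4"
proof -
  assume "p > 1/2"
  hence "(2*p-1)^2 \<noteq> 0" by simp
  hence "(1/(2*p-1)^2 - 1)/4 = (1 - (2*p-1)^2)/(4*(2*p-1)^2)" by (simp add: field_simps)
  also have "1 - (2*p-1)^2 = 4*(p*(1-p))" by (simp add: power2_eq_square algebra_simps)
  finally show ?thesis by simp
qed

lemma g_anti: "(p::real) > 1/2 \<Longrightarrow> p \<le> p' \<Longrightarrow> p'*(1-p')/(2*p'-1)^2 \<le> p*(1-p)/(2*p-1)^2"
proof -
  assume a: "p > 1/2" "p \<le> p'"
  have "(2*p-1)^2 \<le> (2*p'-1)^2" using a by (intro power_mono) auto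
  hence "1/(2*p'-1)^2 \<le> 1/(2*p-1)^2" using a by (intro divide_left_mono) auto
  thus ?thesis using a g_eq[of p] g_eq[of p'] by (simp only:) simp
qed

lemma A_nonneg:
  assumes "n \<ge> 2" "n1 \<le> n" "\<rho> \<in> {-1..1::real}"
  shows "0 \<le> real n + \<rho> * ((2 * real n1 - real n)^2 - real n) / (real n - 1)"
proof -
  define X where "X = (2 * real n1 - real n)^2 - real n"
  have n2: "real n \<ge> 2" using assms by simp
  have "\<bar>2 * real n1 - real n\<bar> \<le> real n" using assms by auto
  hence "(2 * real n1 - real n)^2 \<le> (real n)^2"
    by (metis abs_le_square_iff abs_of_nat)
  hence X1: "X \<le> real n * (real n - 1)" unfolding X_def by (simp add: power2_eq_square algebra_simps)
  have "X \<ge> - real n" unfolding X_def by simp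
  moreover have "real n \<le> real n * (real n - 1)" using n2 by (simp add: algebra_simps)
  ultimately have X2: "X \<ge> - (real n * (real n - 1))" by linarith
  have "\<bar>\<rho> * X\<bar> \<le> 1 * (real n * (real n - 1))"
    unfolding abs_mult using assms X1 X2 by (intro mult_mono) auto
  hence "\<rho> * X \<ge> - (real n * (real n - 1))" by linarith
  hence "\<rho> * X / (real n - 1) \<ge> - real n" using n2 by (simp add: field_simps)
  thus ?thesis unfolding X_def by linarith
qed

theorem theorem4:
  fixes n n1 :: nat
  assumes "n \<ge> 2" and "n1 \<le> n"
  shows "(\<forall>p\<in>{1/2<..1}.
            ((real n1 / real n \<le> 1/2 - 1 / (2 * sqrt (real n)) \<or>
              real n1 / real n \<ge> 1/2 + 1 / (2 * sqrt (real n)))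
               \<longrightarrow> mono_on {-1..1} (\<lambda>\<rho>. jrr_h n n1 p \<rho>)) \<and>
            ((1/2 - 1 / (2 * sqrt (real n)) < real n1 / real n \<and>
              real n1 / real n < 1/2 + 1 / (2 * sqrt (real n)))
               \<longrightarrow> antimono_on {-1..1} (\<lambda>\<rho>. jrr_h n n1 p \<rho>)))
       \<and> (\<forall>\<rho>\<in>{-1..1}. antimono_on {1/2<..1} (\<lambda>p. jrr_h n n1 p \<rho>))"
proof -
  define X where "X = (2 * real n1 - real n)^2 - real n"
  have n2: "real n \<ge> 2" using assms by simp
  have sq: "sqrt (real n) > 0" using n2 by simp
  have ssq: "sqrt (real n) * sqrt (real n) = real n" using n2 by simp
  have key: "(real n1 / real n \<le> 1/2 - 1 / (2 * sqrt (real n)) \<or>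
              real n1 / real n \<ge> 1/2 + 1 / (2 * sqrt (real n))) \<longleftrightarrow> sqrt (real n) \<le> \<bar>2 * real n1 - real n\<bar>"
  proof -
    have e1: "real n1 / real n \<le> 1/2 - 1 / (2 * sqrt (real n)) \<longleftrightarrow> sqrt (real n) \<le> real n - 2 * real n1"
    proof -
      have "real n1 / real n \<le> 1/2 - 1 / (2 * sqrt (real n)) \<longleftrightarrow> 2 * sqrt (real n) * real n1 \<le> sqrt (real n) * real n - real n"
        using sq n2 by (simp add: field_simps)
      also have "\<dots> \<longleftrightarrow> sqrt (real n) * (sqrt (real n)) \<le> sqrt (real n) * (real n - 2 * real n1)"
        using ssq by (simp add: algebra_simps)
      also have "\<dots> \<longleftrightarrow> sqrt (real n) \<le> real n - 2 * real n1" by (rule mult_le_cancel_left_pos[OF sq])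
      finally show ?thesis .
    qed
    have e2: "real n1 / real n \<ge> 1/2 + 1 / (2 * sqrt (real n)) \<longleftrightarrow> sqrt (real n) \<le> 2 * real n1 - real n"
    proof -
      have "real n1 / real n \<ge> 1/2 + 1 / (2 * sqrt (real n)) \<longleftrightarrow> 2 * sqrt (real n) * real n1 \<ge> sqrt (real n) * real n + real n"
        using sq n2 by (simp add: field_simps)
      also have "\<dots> \<longleftrightarrow> sqrt (real n) * (sqrt (real n)) \<le> sqrt (real n) * (2 * real n1 - real n)"
        using ssq by (simp add: algebra_simps)
      also have "\<dots> \<longleftrightarrow> sqrt (real n) \<le> 2 * real n1 - real n" by (rule mult_le_cancel_left_pos[OF sq])
      finally show ?thesis .
    qed
    show ?thesis unfolding e1 e2 by linarith
  qed
  have key2: "sqrt (real n) \<le> \<bar>2 * real n1 - real n\<bar> \<longleftrightarrow> X \<ge> 0"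
  proof -
    have "sqrt (real n) \<le> \<bar>2 * real n1 - real n\<bar> \<longleftrightarrow> sqrt (real n) \<le> sqrt ((2 * real n1 - real n)^2)"
      by (simp only: real_sqrt_abs)
    also have "\<dots> \<longleftrightarrow> real n \<le> (2 * real n1 - real n)^2" by (rule real_sqrt_le_iff)
    finally have "sqrt (real n) \<le> \<bar>2 * real n1 - real n\<bar> \<longleftrightarrow> real n \<le> (2 * real n1 - real n)^2" .
    thus ?thesis unfolding X_def using n2 by simp
  qed
  have P1: "\<forall>p\<in>{1/2<..1}. (X \<ge> 0 \<longrightarrow> mono_on {-1..1} (\<lambda>\<rho>. jrr_h n n1 p \<rho>)) \<and>
             (X < 0 \<longrightarrow> antimono_on {-1..1} (\<lambda>\<rho>. jrr_h n n1 p \<rho>))"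
  proof
    fix p :: real assume p: "p \<in> {1/2<..1}"
    define g where "g = p*(1-p)/(2*p-1)^2"
    have g0: "g \<ge> 0" unfolding g_def using g_nonneg[OF p] .
    have h: "\<And>r. jrr_h n n1 p r = g * real n + r * (g * (X / (real n - 1)))"
      unfolding g_def X_def by (rule h_lin)
    show "(X \<ge> 0 \<longrightarrow> mono_on {-1..1} (\<lambda>\<rho>. jrr_h n n1 p \<rho>)) \<and>
             (X < 0 \<longrightarrow> antimono_on {-1..1} (\<lambda>\<rho>. jrr_h n n1 p \<rho>))"
    proof (intro conjI impI)
      assume "X \<ge> 0"
      hence d: "g * (X / (real n - 1)) \<ge> 0" using g0 n2 by simp
      show "mono_on {-1..1} (\<lambda>\<rho>. jrr_h n n1 p \<rho>)"
        unfolding h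
      proof (rule mono_onI)
        fix r s :: real assume "r \<le> s"
        hence "r * (g * (X / (real n - 1))) \<le> s * (g * (X / (real n - 1)))" using d by (rule mult_right_mono)
        thus "g * real n + r * (g * (X / (real n - 1))) \<le> g * real n + s * (g * (X / (real n - 1)))" by (rule add_left_mono)
      qed
    next
      assume "X < 0"
      hence d: "g * (X / (real n - 1)) \<le> 0" using g0 n2 by (simp add: mult_nonneg_nonpos divide_nonpos_pos)
      show "antimono_on {-1..1} (\<lambda>\<rho>. jrr_h n n1 p \<rho>)"
        unfolding h
      proof (rule monotone_onI)
        fix r s :: real assume "r \<le> s"
        hence "s * (g * (X / (real n - 1))) \<le> r * (g * (X / (real n - 1)))" using d by (rule mult_right_mono_neg)
        thus "g * real n + s * (g * (X / (real n - 1))) \<le> g * real n + r * (g * (X / (real n - 1)))" by (rule add_left_mono)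
      qed
    qed
  qed
  have P2: "\<forall>\<rho>\<in>{-1..1}. antimono_on {1/2<..1} (\<lambda>p. jrr_h n n1 p \<rho>)"
  proof
    fix \<rho> :: real assume r: "\<rho> \<in> {-1..1}"
    have A: "0 \<le> real n + \<rho> * ((2 * real n1 - real n)^2 - real n) / (real n - 1)"
      using A_nonneg[OF assms r] .
    show "antimono_on {1/2<..1} (\<lambda>p. jrr_h n n1 p \<rho>)"
    proof (rule monotone_onI)
      fix p p' :: real assume "p \<in> {1/2<..1}" "p' \<in> {1/2<..1}" "p \<le> p'"
      hence "p'*(1-p')/(2*p'-1)^2 \<le> p*(1-p)/(2*p-1)^2" by (intro g_anti) auto
      hence "p'*(1-p')/(2*p'-1)^2 * (real n + \<rho> * ((2 * real n1 - real n)^2 - real n) / (real n - 1))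
          \<le> p*(1-p)/(2*p-1)^2 * (real n + \<rho> * ((2 * real n1 - real n)^2 - real n) / (real n - 1))"
        using A by (rule mult_right_mono)
      moreover have "\<And>x::real. x - (1 - x) = 2*x - 1" by simp
      ultimately show "jrr_h n n1 p' \<rho> \<le> jrr_h n n1 p \<rho>"
        unfolding jrr_h_def Let_def by simp
    qed
  qed
  show ?thesis using P1 P2 key key2 by (auto simp: not_le)
qed

end
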